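(* If an LJB-sequent $\Gamma\vdash A$ has a derivation in LJB, then it has a non-redundant derivation, i.e. a derivation in which the same LJB-sequent does not occur twice on the same branch.
   Context: LJB: formulas $A ::= P(t_1,\dots,t_n)\mid A\rightarrow A\mid\forall x\,A$ with first-order terms. An LJB-context is a finite multiset of items; an item is a formula or $[\Gamma]_V$ ($V$ a finite set of variables bound by the bracket, $\Gamma$ an LJB-context); $FV([\Gamma]_V)=FV(\Gamma)\setminus V$. An LJB-sequent is $\Gamma\vdash A$ with $\Gamma$ an LJB-context and $A$ a formula. Cleaning rules (anywhere in a context): $[I,\Gamma]_V\longrightarrow I,[\Gamma]_V$ if $FV(I)\cap V=\emptyset$; $[\ ]_V\longrightarrow\emptyset$; $I\,I\longrightarrow I$; $\Gamma{\downarrow}$ is the normal form for a fixed strategy. LJB rules apply only to LJB-sequents with normal context in which, in each formula, bound variables are distinct and distinct from free variables; formulas are not identified modulo $\alpha$. Rules: (L$\rightarrow$) from $\Gamma'\vdash A_1,\dots,\Gamma'\vdash A_n$ infer $\Gamma\vdash P$, where $\Gamma=\Gamma_1,[\Gamma_2,[\dots\Gamma_{i-1},[\Gamma_i, A_1\rightarrow\dots\rightarrow A_n\rightarrow P]_{V_{i-1}}\dots]_{V_2}]_{V_1}$ ($i\ge1$), $\Gamma'=([\dots[[\Gamma_1]_{V_1},\Gamma_2]_{V_2},\dots,\Gamma_{i-1}]_{V_{i-1}},\Gamma_i,A_1\rightarrow\dots\rightarrow A_n\rightarrow P){\downarrow}$, $P$ atomic with no free variable in $V_1\cup\dots\cup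 V_{i-1}$; (R$\forall$) from $[\Gamma]_V{\downarrow}\vdash A$ infer $\Gamma\vdash\forall x\,A$, $V$ the set of all variables bound in $\forall x\,A$; (R$\rightarrow$) from $(\Gamma,A){\downarrow}\vdash B$ infer $\Gamma\vdash A\rightarrow B$. *)

theory Defs
  imports "HOL-Library.Multiset" "HOL-Library.FSet"
begin

datatype trm = Var nat | Fn nat "trm list"

datatype fm = Atom nat "trm list" | Imp fm fm | All nat fm

text \<open>Items: a formula, or a bracket [Gamma]_V with V a finite set of variables.
  An LJB-context is a finite multiset of items.\<close>

datatype item = F fm | Br "nat fset" "item multiset"

type_synonym ctx = "item multiset"

fun fv_trm :: "trm \<Rightarrow> nat set" where
  "fv_trm (Var x) = {x}"
| "fv_trm (Fn f ts) = (\<Union>t\<in>set ts. fv_trm t)"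

fun fv_fm :: "fm \<Rightarrow> nat set" where
  "fv_fm (Atom p ts) = (\<Union>t\<in>set ts. fv_trm t)"
| "fv_fm (Imp A B) = fv_fm A \<union> fv_fm B"
| "fv_fm (All x A) = fv_fm A - {x}"

fun bv_list :: "fm \<Rightarrow> nat list" where
  "bv_list (Atom p ts) = []"
| "bv_list (Imp A B) = bv_list A @ bv_list B"
| "bv_list (All x A) = x # bv_list A"

definition well_named :: "fm \<Rightarrow> bool" where
  "well_named A \<longleftrightarrow> distinct (bv_list A) \<and> set (bv_list A) \<inter> fv_fm A = {}"

primrec fv_item :: "item \<Rightarrow> nat set" where
  "fv_item (F A) = fv_fm A"
| "fv_item (Br V G) = (\<Union> (set_mset (image_mset fv_item G))) - fset V"

primrec fms_item :: "item \<Rightarrow> fm set" where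
  "fms_item (F A) = {A}"
| "fms_item (Br V G) = \<Union> (set_mset (image_mset fms_item G))"

definition fms_ctx :: "ctx \<Rightarrow> fm set" where
  "fms_ctx G = (\<Union>I\<in>set_mset G. fms_item I)"

inductive clean_step :: "ctx \<Rightarrow> ctx \<Rightarrow> bool" where
  out: "fv_item I \<inter> fset V = {} \<Longrightarrow>
        clean_step (add_mset (Br V (add_mset I G)) R) (add_mset I (add_mset (Br V G) R))"
| empty: "clean_step (add_mset (Br V {#}) R) R"
| dup: "clean_step (add_mset I (add_mset I R)) (add_mset I R)"
| inside: "clean_step G G' \<Longrightarrow> clean_step (add_mset (Br V G) R) (add_mset (Br V G') R)"

definition clean_normal :: "ctx \<Rightarrow> bool" where
  "clean_normal G \<longleftrightarrow> (\<nexists>G'. clean_step G G')"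

definition cleaning_strategy :: "(ctx \<Rightarrow> ctx) \<Rightarrow> bool" where
  "cleaning_strategy nf \<longleftrightarrow> (\<forall>G. clean_step\<^sup>*\<^sup>* G (nf G) \<and> clean_normal (nf G))"

text \<open>nest [(G1,V1),...,(G(i-1),V(i-1))] Gi B =
  G1,[G2,[...G(i-1),[Gi, B]_V(i-1)...]_V2]_V1\<close>
fun nest :: "(ctx \<times> nat fset) list \<Rightarrow> ctx \<Rightarrow> fm \<Rightarrow> ctx" where
  "nest [] Gi B = Gi + {#F B#}"
| "nest ((G, V) # L) Gi B = G + {#Br V (nest L Gi B)#}"

text \<open>unnest acc [(G1,V1),...] : [...[[G1]_V1,G2]_V2,...,G(i-1)]_V(i-1), starting from acc = empty\<close>
fun unnest :: "ctx \<Rightarrow> (ctx \<times> nat fset) list \<Rightarrow> ctx" where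
  "unnest acc [] = acc"
| "unnest acc ((G, V) # L) = unnest {#Br V (acc + G)#} L"

type_synonym sequent = "ctx \<times> fm"

definition ljb_sequent_ok :: "sequent \<Rightarrow> bool" where
  "ljb_sequent_ok s \<longleftrightarrow> clean_normal (fst s) \<and>
     (\<forall>A \<in> fms_ctx (fst s) \<union> {snd s}. well_named A)"

inductive ljb_rule :: "(ctx \<Rightarrow> ctx) \<Rightarrow> sequent \<Rightarrow> sequent list \<Rightarrow> bool" for nf where
  L_imp: "\<lbrakk> ljb_sequent_ok (\<Gamma>, Atom p ts);
            \<Gamma> = nest L Gi (foldr Imp As (Atom p ts));
            fv_fm (Atom p ts) \<inter> (\<Union>(G, V)\<in>set L. fset V) = {};
            \<Gamma>' = nf (unnest {#} L + Gi + {#F (foldr Imp As (Atom p ts))#}) \<rbrakk>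
          \<Longrightarrow> ljb_rule nf (\<Gamma>, Atom p ts) (map (\<lambda>A. (\<Gamma>', A)) As)"
| R_all: "\<lbrakk> ljb_sequent_ok (\<Gamma>, All x A) \<rbrakk>
          \<Longrightarrow> ljb_rule nf (\<Gamma>, All x A) [(nf {#Br (fset_of_list (bv_list (All x A))) \<Gamma>#}, A)]"
| R_imp: "\<lbrakk> ljb_sequent_ok (\<Gamma>, Imp A B) \<rbrakk>
          \<Longrightarrow> ljb_rule nf (\<Gamma>, Imp A B) [(nf (\<Gamma> + {#F A#}), B)]"

datatype dtree = Node ctx fm "dtree list"

fun root :: "dtree \<Rightarrow> sequent" where
  "root (Node G C ts) = (G, C)"

inductive is_derivation :: "(ctx \<Rightarrow> ctx) \<Rightarrow> dtree \<Rightarrow> bool" for nf where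
  "\<lbrakk> ljb_rule nf (G, C) (map root ts); \<forall>t\<in>set ts. is_derivation nf t \<rbrakk>
   \<Longrightarrow> is_derivation nf (Node G C ts)"

fun seqs :: "dtree \<Rightarrow> sequent set" where
  "seqs (Node G C ts) = insert (G, C) (\<Union>t\<in>set ts. seqs t)"

inductive non_redundant :: "dtree \<Rightarrow> bool" where
  "\<lbrakk> \<forall>t\<in>set ts. (G, C) \<notin> seqs t \<and> non_redundant t \<rbrakk>
   \<Longrightarrow> non_redundant (Node G C ts)"

end

theory Submission
  imports Defs
begin

lemma child_size: "t \<in> set ts \<Longrightarrow> size t < size (Node G C ts)"
  by (induct ts) auto

lemma sub_deriv:
  "is_derivation nf t \<Longrightarrow> S \<in> seqs t \<Longrightarrow>
   \<exists>s. is_derivation nf s \<and> root s = S \<and> size s \<le> size t \<and> seqs s \<subseteq> seqs t"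
proof (induct t)
  case (Node G C ts)
  from Node.prems(1) have ch: "\<forall>t\<in>set ts. is_derivation nf t"
    by (cases rule: is_derivation.cases) auto
  show ?case
  proof (cases "S = (G, C)")
    case True then show ?thesis using Node.prems(1) by auto
  next
    case False
    then obtain t where t: "t \<in> set ts" "S \<in> seqs t" using Node.prems(2) by auto
    from Node.hyps[OF t(1)] ch t obtain s where
      "is_derivation nf s" "root s = S" "size s \<le> size t" "seqs s \<subseteq> seqs t" by blast
    moreover have "size t < size (Node G C ts)" using child_size[OF t(1)] .
    moreover have "seqs t \<subseteq> seqs (Node G C ts)" using t(1) by auto
    ultimately show ?thesis by (metis dual_order.trans less_imp_le order.trans)
  qed
qed

lemma choice_list: "(\<forall>x\<in>set xs. \<exists>y. P x y) \<Longrightarrow> \<exists>ys. list_all2 P xs ys"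
  by (induct xs) (auto intro: list_all2_Cons[THEN iffD2])

lemma main:
  "is_derivation nf d \<Longrightarrow>
   \<exists>d'. is_derivation nf d' \<and> root d' = root d \<and> non_redundant d' \<and> seqs d' \<subseteq> seqs d"
proof (induct d rule: measure_induct_rule[where f = size])
  case (less d)
  obtain G C ts where d: "d = Node G C ts" by (cases d)
  from less.prems have rule: "ljb_rule nf (G, C) (map root ts)"
    and ch: "\<forall>t\<in>set ts. is_derivation nf t"
    unfolding d by (auto elim: is_derivation.cases)
  show ?case
  proof (cases "\<exists>t\<in>set ts. (G, C) \<in> seqs t")
    case True
    then obtain t where t: "t \<in> set ts" "(G, C) \<in> seqs t" by blast
    from sub_deriv[of nf t] ch t obtain s where
      s: "is_derivation nf s" "root s = (G, C)" "size s \<le> size t" "seqs s \<subseteq> seqs t" by blast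
    have "size s < size d" using s(3) child_size[OF t(1)] d by simp
    from less.hyps[OF this s(1)] obtain d' where
      d': "is_derivation nf d'" "root d' = root s" "non_redundant d'" "seqs d' \<subseteq> seqs s" by blast
    have "seqs t \<subseteq> seqs d" using t(1) d by auto
    hence "seqs d' \<subseteq> seqs d" using d'(4) s(4) by blast
    moreover have "root d' = root d" using d'(2) s(2) d by simp
    ultimately show ?thesis using d' by blast
  next
    case False
    have "\<forall>t\<in>set ts. \<exists>t'. is_derivation nf t' \<and> root t' = root t \<and> non_redundant t' \<and> seqs t' \<subseteq> seqs t"
    proof
      fix t assume t: "t \<in> set ts"
      have "size t < size d" using child_size[OF t] d by simp
      from less.hyps[OF this] ch t show "\<exists>t'. is_derivation nf t' \<and> root t' = root t \<and> non_redundant t' \<and> seqs t' \<subseteq> seqs t" by blast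
    qed
    then obtain ts' where L: "list_all2 (\<lambda>t t'. is_derivation nf t' \<and> root t' = root t \<and> non_redundant t' \<and> seqs t' \<subseteq> seqs t) ts ts'"
      by (rule choice_list[THEN exE])
    have mr: "map root ts' = map root ts"
      using L by (induct rule: list_all2_induct) auto
    have P: "\<forall>t'\<in>set ts'. \<exists>t\<in>set ts. is_derivation nf t' \<and> non_redundant t' \<and> seqs t' \<subseteq> seqs t"
      using L by (induct rule: list_all2_induct) auto
    have D: "\<forall>t'\<in>set ts'. is_derivation nf t'" using P by blast
    have "is_derivation nf (Node G C ts')"
      using mr rule D by (intro is_derivation.intros) simp_all
    moreover have "non_redundant (Node G C ts')"
    proof (rule non_redundant.intros, rule ballI)
      fix t' assume t': "t' \<in> set ts'"
      then obtain t where t: "t \<in> set ts" "non_redundant t'" "seqs t' \<subseteq> seqs t" using P by blast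
      have "(G, C) \<notin> seqs t" using False t(1) by blast
      then show "(G, C) \<notin> seqs t' \<and> non_redundant t'" using t by blast
    qed
    moreover have "seqs (Node G C ts') \<subseteq> seqs d"
    proof
      fix S assume "S \<in> seqs (Node G C ts')"
      then consider "S = (G, C)" | t' where "t' \<in> set ts'" "S \<in> seqs t'" by auto
      then show "S \<in> seqs d"
      proof cases
        case 1 then show ?thesis using d by simp
      next
        case 2
        then obtain t where "t \<in> set ts" "seqs t' \<subseteq> seqs t" using P by blast
        then show ?thesis using 2 d by auto
      qed
    qed
    moreover have "root (Node G C ts') = root d" using d by simp
    ultimately show ?thesis by blast
  qed
qed

theorem proposition14:
  fixes nf :: "ctx \<Rightarrow> ctx" and \<Gamma> :: ctx and A :: fm
  assumes "cleaning_strategy nf"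
    and "\<exists>d. is_derivation nf d \<and> root d = (\<Gamma>, A)"
  shows "\<exists>d. is_derivation nf d \<and> root d = (\<Gamma>, A) \<and> non_redundant d"
proof -
  obtain d where d: "is_derivation nf d" "root d = (\<Gamma>, A)" using assms(2) by blast
  from main[OF d(1)] d(2) show ?thesis by auto
qed

end
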